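(* There exist 4-GDDs of types $93^8 318^1$ and $93^8 321^1$.
   Context: A 4-GDD of type $g_1^{u_1}\cdots g_r^{u_r}$ is a triple $(V,\mathcal G,\mathcal B)$ where $V$ is a set of $u_1g_1+\cdots+u_rg_r$ points, $\mathcal G$ is a partition of $V$ into $u_i$ groups of size $g_i$ for each $i$, and $\mathcal B$ is a non-empty collection of 4-element subsets (blocks) such that every pair of points from distinct groups lies in exactly one block and no pair from the same group lies in any block. *)

theory Defs
  imports Main "HOL-Library.Multiset"
begin

definition is_4GDD :: "'a set \<Rightarrow> 'a set set \<Rightarrow> 'a set set \<Rightarrow> bool" where
  "is_4GDD V G B \<longleftrightarrow>
     finite V \<and>
     (\<forall>g\<in>G. g \<noteq> {} \<and> g \<subseteq> V) \<and>
     (\<forall>g\<in>G. \<forall>h\<in>G. g \<noteq> h \<longrightarrow> g \<inter> h = {}) \<and>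
     \<Union>G = V \<and>
     B \<noteq> {} \<and>
     (\<forall>b\<in>B. b \<subseteq> V \<and> card b = 4) \<and>
     (\<forall>x\<in>V. \<forall>y\<in>V. (\<forall>g\<in>G. \<not> (x \<in> g \<and> y \<in> g)) \<longrightarrow> (\<exists>!b. b \<in> B \<and> x \<in> b \<and> y \<in> b)) \<and>
     (\<forall>g\<in>G. \<forall>x\<in>g. \<forall>y\<in>g. x \<noteq> y \<longrightarrow> \<not> (\<exists>b\<in>B. x \<in> b \<and> y \<in> b))"

text \<open>The type of a GDD: the multiset of its group sizes.
 Type g1^u1 ... gr^ur corresponds to the multiset with g_i occurring u_i times.\<close>

definition gdd_type :: "'a set set \<Rightarrow> nat multiset" where
  "gdd_type G = image_mset card (mset_set G)"

definition has_4GDD_of_type :: "nat multiset \<Rightarrow> bool" where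
  "has_4GDD_of_type T \<longleftrightarrow>
     (\<exists>(V::nat set) G B. is_4GDD V G B \<and> gdd_type G = T)"

end

theory Submission
  imports Defs "HOL-Library.Countable"
begin


lemma G4_fin: "is_4GDD V G B \<Longrightarrow> finite V"
  unfolding is_4GDD_def by (elim conjE) assumption
lemma G4_gr: "is_4GDD V G B \<Longrightarrow> \<forall>g\<in>G. g \<noteq> {} \<and> g \<subseteq> V"
  unfolding is_4GDD_def by (elim conjE) assumption
lemma G4_dj: "is_4GDD V G B \<Longrightarrow> \<forall>g\<in>G. \<forall>h\<in>G. g \<noteq> h \<longrightarrow> g \<inter> h = {}"
  unfolding is_4GDD_def by (elim conjE) assumption
lemma G4_un: "is_4GDD V G B \<Longrightarrow> \<Union>G = V"
  unfolding is_4GDD_def by (elim conjE) assumption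
lemma G4_ne: "is_4GDD V G B \<Longrightarrow> B \<noteq> {}"
  unfolding is_4GDD_def by (elim conjE) assumption
lemma G4_bl: "is_4GDD V G B \<Longrightarrow> \<forall>b\<in>B. b \<subseteq> V \<and> card b = 4"
  unfolding is_4GDD_def by (elim conjE) assumption
lemma G4_cv: "is_4GDD V G B \<Longrightarrow> \<forall>x\<in>V. \<forall>y\<in>V. (\<forall>g\<in>G. \<not> (x \<in> g \<and> y \<in> g)) \<longrightarrow> (\<exists>!b. b \<in> B \<and> x \<in> b \<and> y \<in> b)"
  unfolding is_4GDD_def by (elim conjE) assumption
lemma G4_sg: "is_4GDD V G B \<Longrightarrow> \<forall>g\<in>G. \<forall>x\<in>g. \<forall>y\<in>g. x \<noteq> y \<longrightarrow> \<not> (\<exists>b\<in>B. x \<in> b \<and> y \<in> b)"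
  unfolding is_4GDD_def by (elim conjE) assumption

lemma G4_blk: "is_4GDD V G B \<Longrightarrow> b \<in> B \<Longrightarrow> b \<subseteq> V \<and> card b = 4"
  using G4_bl by blast

lemma G4_cov: "is_4GDD V G B \<Longrightarrow> x \<in> V \<Longrightarrow> y \<in> V \<Longrightarrow> (\<forall>g\<in>G. \<not> (x \<in> g \<and> y \<in> g)) \<Longrightarrow> \<exists>!b. b \<in> B \<and> x \<in> b \<and> y \<in> b"
  by (rule mp[OF bspec[OF bspec[OF G4_cv]]])

lemma G4_same: "is_4GDD V G B \<Longrightarrow> g \<in> G \<Longrightarrow> x \<in> g \<Longrightarrow> y \<in> g \<Longrightarrow> x \<noteq> y \<Longrightarrow> b \<in> B \<Longrightarrow> x \<in> b \<Longrightarrow> y \<in> b \<Longrightarrow> False"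
  using G4_sg by blast

lemma G4_intro:
  assumes "finite V" "\<forall>g\<in>G. g \<noteq> {} \<and> g \<subseteq> V" "\<forall>g\<in>G. \<forall>h\<in>G. g \<noteq> h \<longrightarrow> g \<inter> h = {}"
    "\<Union>G = V" "B \<noteq> {}" "\<forall>b\<in>B. b \<subseteq> V \<and> card b = 4"
    "\<forall>x\<in>V. \<forall>y\<in>V. (\<forall>g\<in>G. \<not> (x \<in> g \<and> y \<in> g)) \<longrightarrow> (\<exists>!b. b \<in> B \<and> x \<in> b \<and> y \<in> b)"
    "\<forall>g\<in>G. \<forall>x\<in>g. \<forall>y\<in>g. x \<noteq> y \<longrightarrow> \<not> (\<exists>b\<in>B. x \<in> b \<and> y \<in> b)"
  shows "is_4GDD V G B"
  unfolding is_4GDD_def using assms by (intro conjI)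

lemma ex1_obtain: "\<exists>!x. P x \<Longrightarrow> (\<And>x. P x \<Longrightarrow> (\<And>y. P y \<Longrightarrow> y = x) \<Longrightarrow> thesis) \<Longrightarrow> thesis"
  by blast

lemma is_4GDD_image:
  assumes D: "is_4GDD V G B" and inj: "inj_on h V"
  shows "is_4GDD (h ` V) ((`) h ` G) ((`) h ` B)"
proof -
  note fin = G4_fin[OF D] and gr = G4_gr[OF D] and dj = G4_dj[OF D] and un = G4_un[OF D]
    and bne = G4_ne[OF D] and bl = G4_bl[OF D] and cov = G4_cv[OF D] and sg = G4_sg[OF D]
  have memb: "\<And>S x. S \<subseteq> V \<Longrightarrow> x \<in> V \<Longrightarrow> h x \<in> h ` S \<longleftrightarrow> x \<in> S"
    using inj by (auto simp: inj_on_def)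
  show ?thesis
  proof (rule G4_intro; (intro ballI allI impI)?)
    show "finite (h ` V)" using fin by simp
  next
    fix g assume "g \<in> (`) h ` G" then show "g \<noteq> {} \<and> g \<subseteq> h ` V" using gr by auto
  next
    fix g g' assume a: "g \<in> (`) h ` G" "g' \<in> (`) h ` G" "g \<noteq> g'"
    then obtain g0 g0' where g0: "g0 \<in> G" "g0' \<in> G" "g = h ` g0" "g' = h ` g0'" by auto
    then have "g0 \<noteq> g0'" using a(3) by auto
    then have "g0 \<inter> g0' = {}" using dj g0 by blast
    moreover have "g0 \<subseteq> V" "g0' \<subseteq> V" using gr g0 by auto
    ultimately show "g \<inter> g' = {}" using inj_on_image_Int[OF inj] g0 by (metis image_empty)
  next
    show "\<Union> ((`) h ` G) = h ` V" using un by auto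
  next
    show "(`) h ` B \<noteq> {}" using bne by auto
  next
    fix b assume "b \<in> (`) h ` B"
    then obtain b0 where b0: "b0 \<in> B" "b = h ` b0" by auto
    then have "inj_on h b0" using bl inj inj_on_subset by blast
    then show "b \<subseteq> h ` V \<and> card b = 4" using b0 bl card_image by fastforce
  next
    fix x y assume xy: "x \<in> h ` V" "y \<in> h ` V" and ng: "\<forall>g\<in>(`) h ` G. \<not> (x \<in> g \<and> y \<in> g)"
    then obtain x0 y0 where x0: "x0 \<in> V" "x = h x0" and y0: "y0 \<in> V" "y = h y0" by auto
    have "\<forall>g\<in>G. \<not> (x0 \<in> g \<and> y0 \<in> g)" using ng x0 y0 by auto
    then have ex: "\<exists>!b. b \<in> B \<and> x0 \<in> b \<and> y0 \<in> b"
      by (rule mp[OF bspec[OF bspec[OF cov x0(1)] y0(1)]])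
    obtain b0 where b00: "b0 \<in> B \<and> x0 \<in> b0 \<and> y0 \<in> b0"
      and u0: "\<And>b. b \<in> B \<and> x0 \<in> b \<and> y0 \<in> b \<Longrightarrow> b = b0"
      by (rule ex1_obtain[OF ex], blast)
    have b0: "b0 \<in> B" "x0 \<in> b0" "y0 \<in> b0" using b00 by auto
    have u: "\<And>b. b \<in> B \<Longrightarrow> x0 \<in> b \<Longrightarrow> y0 \<in> b \<Longrightarrow> b = b0" using u0 by blast
    show "\<exists>!b. b \<in> (`) h ` B \<and> x \<in> b \<and> y \<in> b"
    proof
      show "h ` b0 \<in> (`) h ` B \<and> x \<in> h ` b0 \<and> y \<in> h ` b0" using b0 x0 y0 by auto
    next
      fix b assume "b \<in> (`) h ` B \<and> x \<in> b \<and> y \<in> b"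
      then obtain b1 where b1: "b1 \<in> B" "b = h ` b1" "x \<in> h ` b1" "y \<in> h ` b1" by auto
      then have "x0 \<in> b1" "y0 \<in> b1" using memb bl x0 y0 by auto
      then show "b = h ` b0" using u b1 by auto
    qed
  next
    fix g x y assume g: "g \<in> (`) h ` G" and x: "x \<in> g" and y: "y \<in> g" and ne: "x \<noteq> y"
    then obtain g0 where g0: "g0 \<in> G" "g = h ` g0" by auto
    then obtain x0 y0 where x0: "x0 \<in> g0" "x = h x0" and y0: "y0 \<in> g0" "y = h y0" using x y by auto
    show "\<not> (\<exists>b\<in>(`) h ` B. x \<in> b \<and> y \<in> b)"
    proof
      assume "\<exists>b\<in>(`) h ` B. x \<in> b \<and> y \<in> b"
      then obtain b1 where b1: "b1 \<in> B" "x \<in> h ` b1" "y \<in> h ` b1" by auto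
      have "x0 \<in> V" "y0 \<in> V" using x0 y0 g0 gr by auto
      then have "x0 \<in> b1" "y0 \<in> b1" using memb bl b1 x0 y0 by auto
      moreover have "x0 \<noteq> y0" using ne x0 y0 by auto
      ultimately show False using sg g0 x0 y0 b1 by blast
    qed
  qed
qed

lemma gdd_type_image:
  assumes "inj h"
  shows "gdd_type ((`) h ` G) = gdd_type G"
proof -
  have i1: "inj_on ((`) h) G" using assms by (simp add: inj_on_def inj_image_eq_iff)
  have 1: "mset_set ((`) h ` G) = image_mset ((`) h) (mset_set G)"
    by (rule image_mset_mset_set[OF i1, symmetric])
  have 2: "\<And>g. card (h ` g) = card g"
    by (rule card_image[OF inj_on_subset[OF assms subset_UNIV]])
  have "image_mset card (image_mset ((`) h) (mset_set G)) = image_mset (card \<circ> (`) h) (mset_set G)"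
    by (rule multiset.map_comp)
  also have "\<dots> = image_mset card (mset_set G)"
    by (rule image_mset_cong) (simp add: 2)
  finally show ?thesis unfolding gdd_type_def 1 .
qed

lemma wilson3:
  fixes P :: "'m set" and GM MB :: "'m set set"
    and IG I :: "'m set \<Rightarrow> ('m \<times> nat) set set"
  assumes finP: "finite P"
    and gm: "\<forall>G\<in>GM. G \<noteq> {} \<and> G \<subseteq> P"
    and gmd: "\<forall>G\<in>GM. \<forall>G'\<in>GM. G \<noteq> G' \<longrightarrow> G \<inter> G' = {}"
    and gmu: "\<Union>GM = P"
    and mbne: "MB \<noteq> {}"
    and mbs: "\<forall>\<beta>\<in>MB. \<beta> \<subseteq> P"
    and cov: "\<forall>p\<in>P. \<forall>q\<in>P. (\<forall>G\<in>GM. \<not> (p \<in> G \<and> q \<in> G)) \<longrightarrow> (\<exists>!\<beta>. \<beta> \<in> MB \<and> p \<in> \<beta> \<and> q \<in> \<beta>)"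
    and ing: "\<forall>\<beta>\<in>MB. is_4GDD (\<beta> \<times> {0..<3}) (IG \<beta>) (I \<beta>)"
    and igsub: "\<forall>\<beta>\<in>MB. \<forall>g\<in>IG \<beta>. \<forall>x\<in>g. \<forall>y\<in>g. \<exists>G\<in>GM. fst x \<in> G \<and> fst y \<in> G"
    and igsame: "\<forall>\<beta>\<in>MB. \<forall>G\<in>GM. \<forall>p\<in>\<beta> \<inter> G. \<forall>q\<in>\<beta> \<inter> G. \<forall>a<3. \<forall>b<3. \<exists>g\<in>IG \<beta>. (p, a) \<in> g \<and> (q, b) \<in> g"
  shows "is_4GDD (P \<times> {0..<3}) ((\<lambda>G. G \<times> {0..<3}) ` GM) (\<Union>\<beta>\<in>MB. I \<beta>)"
proof (rule G4_intro)
  show "finite (P \<times> {0..<3::nat})" using finP by simp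
next
  show "\<forall>g\<in>(\<lambda>G. G \<times> {0..<3::nat}) ` GM. g \<noteq> {} \<and> g \<subseteq> P \<times> {0..<3}" using gm by auto
next
  show "\<forall>g\<in>(\<lambda>G. G \<times> {0..<3::nat}) ` GM. \<forall>g'\<in>(\<lambda>G. G \<times> {0..<3::nat}) ` GM. g \<noteq> g' \<longrightarrow> g \<inter> g' = {}"
    using gmd by auto
next
  show "\<Union> ((\<lambda>G. G \<times> {0..<3::nat}) ` GM) = P \<times> {0..<3}" using gmu by auto
next
  obtain \<beta> where "\<beta> \<in> MB" using mbne by auto
  then have "I \<beta> \<noteq> {}" using ing G4_ne by blast
  then show "(\<Union>\<beta>\<in>MB. I \<beta>) \<noteq> {}" using \<open>\<beta> \<in> MB\<close> by auto
next
  show "\<forall>b\<in>(\<Union>\<beta>\<in>MB. I \<beta>). b \<subseteq> P \<times> {0..<3} \<and> card b = 4"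
  proof
    fix b assume "b \<in> (\<Union>\<beta>\<in>MB. I \<beta>)"
    then obtain \<beta> where "\<beta> \<in> MB" "b \<in> I \<beta>" by auto
    then have "b \<subseteq> \<beta> \<times> {0..<3} \<and> card b = 4" using ing G4_blk by blast
    then show "b \<subseteq> P \<times> {0..<3} \<and> card b = 4" using mbs \<open>\<beta> \<in> MB\<close> by blast
  qed
next
  show "\<forall>x\<in>P \<times> {0..<3}. \<forall>y\<in>P \<times> {0..<3}. (\<forall>g\<in>(\<lambda>G. G \<times> {0..<3::nat}) ` GM. \<not> (x \<in> g \<and> y \<in> g)) \<longrightarrow>
     (\<exists>!c. c \<in> (\<Union>\<beta>\<in>MB. I \<beta>) \<and> x \<in> c \<and> y \<in> c)"
  proof (intro ballI impI)
  fix x y assume x: "x \<in> P \<times> {0..<3::nat}" and y: "y \<in> P \<times> {0..<3::nat}"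
    and ng: "\<forall>g\<in>(\<lambda>G. G \<times> {0..<3::nat}) ` GM. \<not> (x \<in> g \<and> y \<in> g)"
  obtain p a q b where pa: "x = (p, a)" "p \<in> P" "a < 3" and qb: "y = (q, b)" "q \<in> P" "b < 3"
    using x y by auto
  have ngm: "\<forall>G\<in>GM. \<not> (p \<in> G \<and> q \<in> G)" using ng pa qb by auto
  have ex: "\<exists>!\<beta>. \<beta> \<in> MB \<and> p \<in> \<beta> \<and> q \<in> \<beta>" by (rule mp[OF bspec[OF bspec[OF cov pa(2)] qb(2)] ngm])
  obtain \<beta> where \<beta>0: "\<beta> \<in> MB \<and> p \<in> \<beta> \<and> q \<in> \<beta>"
    and u0: "\<And>\<beta>'. \<beta>' \<in> MB \<and> p \<in> \<beta>' \<and> q \<in> \<beta>' \<Longrightarrow> \<beta>' = \<beta>"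
    by (rule ex1_obtain[OF ex], blast)
  have \<beta>: "\<beta> \<in> MB" "p \<in> \<beta>" "q \<in> \<beta>" using \<beta>0 by auto
  have u: "\<And>\<beta>'. \<beta>' \<in> MB \<Longrightarrow> p \<in> \<beta>' \<Longrightarrow> q \<in> \<beta>' \<Longrightarrow> \<beta>' = \<beta>" using u0 by blast
  have D: "is_4GDD (\<beta> \<times> {0..<3}) (IG \<beta>) (I \<beta>)" using ing \<beta>(1) by blast
  have ngi: "\<forall>g\<in>IG \<beta>. \<not> (x \<in> g \<and> y \<in> g)"
  proof (intro ballI notI)
    fix g assume g: "g \<in> IG \<beta>" "x \<in> g \<and> y \<in> g"
    have "\<exists>G\<in>GM. fst x \<in> G \<and> fst y \<in> G" using igsub[rule_format, OF \<beta>(1) g(1)] g(2) by blast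
    then obtain G where "G \<in> GM" "p \<in> G" "q \<in> G" using pa qb by auto
    then show False using ngm by auto
  qed
  have xin: "x \<in> \<beta> \<times> {0..<3}" and yin: "y \<in> \<beta> \<times> {0..<3}" using pa qb \<beta> by auto
  have exc: "\<exists>!c. c \<in> I \<beta> \<and> x \<in> c \<and> y \<in> c" by (rule G4_cov[OF D xin yin ngi])
  obtain c where c0: "c \<in> I \<beta> \<and> x \<in> c \<and> y \<in> c"
    and uc0: "\<And>c'. c' \<in> I \<beta> \<and> x \<in> c' \<and> y \<in> c' \<Longrightarrow> c' = c"
    by (rule ex1_obtain[OF exc], blast)
  have c: "c \<in> I \<beta>" "x \<in> c" "y \<in> c" using c0 by auto
  have uc: "\<And>c'. c' \<in> I \<beta> \<Longrightarrow> x \<in> c' \<Longrightarrow> y \<in> c' \<Longrightarrow> c' = c" using uc0 by blast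
  show "\<exists>!c. c \<in> (\<Union>\<beta>\<in>MB. I \<beta>) \<and> x \<in> c \<and> y \<in> c"
  proof
    show "c \<in> (\<Union>\<beta>\<in>MB. I \<beta>) \<and> x \<in> c \<and> y \<in> c" using c \<beta> by auto
  next
    fix c' assume "c' \<in> (\<Union>\<beta>\<in>MB. I \<beta>) \<and> x \<in> c' \<and> y \<in> c'"
    then obtain \<beta>' where b': "\<beta>' \<in> MB" "c' \<in> I \<beta>'" "x \<in> c'" "y \<in> c'" by auto
    then have "c' \<subseteq> \<beta>' \<times> {0..<3}" using ing G4_blk by blast
    then have "p \<in> \<beta>'" "q \<in> \<beta>'" using b' pa qb by auto
    then have "\<beta>' = \<beta>" using u b' by auto
    then show "c' = c" using uc b' by auto
  qed
  qed
next
  show "\<forall>g\<in>(\<lambda>G. G \<times> {0..<3::nat}) ` GM. \<forall>x\<in>g. \<forall>y\<in>g. x \<noteq> y \<longrightarrow> \<not> (\<exists>c\<in>\<Union>\<beta>\<in>MB. I \<beta>. x \<in> c \<and> y \<in> c)"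
  proof (intro ballI impI)
  fix g x y assume g: "g \<in> (\<lambda>G. G \<times> {0..<3::nat}) ` GM" and x: "x \<in> g" and y: "y \<in> g" and ne: "x \<noteq> y"
  then obtain G where G: "G \<in> GM" "g = G \<times> {0..<3}" by auto
  obtain p a q b where pa: "x = (p, a)" "p \<in> G" "a < 3" and qb: "y = (q, b)" "q \<in> G" "b < 3"
    using x y G by auto
  show "\<not> (\<exists>c\<in>\<Union>\<beta>\<in>MB. I \<beta>. x \<in> c \<and> y \<in> c)"
  proof
    assume "\<exists>c\<in>\<Union>\<beta>\<in>MB. I \<beta>. x \<in> c \<and> y \<in> c"
    then obtain \<beta> c where bc: "\<beta> \<in> MB" "c \<in> I \<beta>" "x \<in> c" "y \<in> c" by auto
    have D: "is_4GDD (\<beta> \<times> {0..<3}) (IG \<beta>) (I \<beta>)" using ing bc(1) by blast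
    then have "c \<subseteq> \<beta> \<times> {0..<3}" using bc G4_blk by blast
    then have "p \<in> \<beta> \<inter> G" "q \<in> \<beta> \<inter> G" using bc pa qb by auto
    then have "\<exists>g'\<in>IG \<beta>. (p, a) \<in> g' \<and> (q, b) \<in> g'" using igsame[rule_format, OF bc(1) G(1)] pa(3) qb(3) by blast
    then obtain g' where "g' \<in> IG \<beta>" "x \<in> g'" "y \<in> g'" using pa qb by blast
    then show False using G4_same[OF D _ _ _ ne] bc by blast
  qed
  qed
qed



definition chk :: "'a list \<Rightarrow> ('a \<Rightarrow> nat) \<Rightarrow> 'a list list \<Rightarrow> bool" where
  "chk pts grp blks \<longleftrightarrow> blks \<noteq> [] \<and>
     (\<forall>b\<in>set blks. length b = 4 \<and> distinct b \<and> set b \<subseteq> set pts \<and> distinct (map grp b)) \<and>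
     (\<forall>x\<in>set pts. \<forall>y\<in>set pts. grp x \<noteq> grp y \<longrightarrow> length (filter (\<lambda>b. x \<in> set b \<and> y \<in> set b) blks) = 1)"

definition tpts :: "nat \<Rightarrow> (nat \<times> nat) list" where
  "tpts k = List.product [0..<k] [0..<3]"

definition tgrp :: "nat \<Rightarrow> nat \<times> nat \<Rightarrow> nat" where
  "tgrp k0 x = min (fst x) k0"

definition T4 :: "(nat \<times> nat) list list" where
  "T4 = [[(0,0), (1,0), (2,0), (3,0)], [(0,0), (1,1), (2,1), (3,2)], [(0,0), (1,2), (2,2), (3,1)], [(0,1), (1,0), (2,1), (3,1)], [(0,1), (1,1), (2,2), (3,0)], [(0,1), (1,2), (2,0), (3,2)], [(0,2), (1,0), (2,2), (3,2)], [(0,2), (1,1), (2,0), (3,1)], [(0,2), (1,2), (2,1), (3,0)]]"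
definition T5 :: "(nat \<times> nat) list list" where
  "T5 = [[(0,0), (1,0), (2,0), (4,0)], [(0,0), (1,2), (3,0), (4,1)], [(0,0), (2,1), (3,1), (4,2)], [(0,0), (1,1), (2,2), (3,2)], [(1,0), (2,2), (3,1), (4,1)], [(0,1), (1,0), (3,2), (4,2)], [(0,2), (1,0), (2,1), (3,0)], [(1,2), (2,1), (3,2), (4,0)], [(0,1), (1,2), (2,0), (3,1)], [(0,1), (1,1), (2,1), (4,1)], [(0,1), (2,2), (3,0), (4,0)], [(0,2), (1,2), (2,2), (4,2)], [(0,2), (1,1), (3,1), (4,0)], [(0,2), (2,0), (3,2), (4,1)], [(1,1), (2,0), (3,0), (4,2)]]"
definition T56 :: "(nat \<times> nat) list list" where
  "T56 = [[(0,0), (1,1), (2,0), (5,0)], [(2,1), (3,0), (4,2), (5,0)], [(0,1), (2,2), (3,2), (5,0)], [(0,2), (1,0), (4,1), (5,0)], [(1,2), (3,1), (4,0), (5,0)], [(0,0), (3,2), (4,0), (5,1)], [(1,0), (3,2), (4,2), (6,0)], [(1,0), (2,0), (3,0), (5,1)], [(0,1), (2,0), (4,0), (5,2)], [(1,0), (2,2), (4,0), (6,2)], [(0,1), (1,0), (2,1), (6,1)], [(0,0), (1,0), (3,1), (5,2)], [(1,1), (2,1), (4,0), (6,0)], [(0,2), (3,0), (4,0), (6,1)], [(0,0), (2,1), (4,1), (6,2)], [(0,2), (2,1), (3,1), (5,1)], [(1,2), (2,1), (3,2), (5,2)], [(0,2), (1,1), (3,2), (6,2)], [(0,2), (2,2),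 (4,2), (5,2)], [(0,0), (1,2), (4,2), (6,1)], [(0,0), (2,2), (3,0), (6,0)], [(0,2), (1,2), (2,0), (6,0)], [(0,1), (3,1), (4,1), (6,0)], [(0,1), (1,1), (4,2), (5,1)], [(0,1), (1,2), (3,0), (6,2)], [(1,1), (3,0), (4,1), (5,2)], [(1,1), (2,2), (3,1), (6,1)], [(1,2), (2,2), (4,1), (5,1)], [(2,0), (3,1), (4,2), (6,2)], [(2,0), (3,2), (4,1), (6,1)]]"

lemma filter_len1:
  assumes "length (filter P xs) = 1" "a \<in> set xs" "P a" "b \<in> set xs" "P b"
  shows "a = b"
proof -
  obtain c where "filter P xs = [c]" using assms(1) by (cases "filter P xs") auto
  then have "set (filter P xs) = {c}" by simp
  moreover have "a \<in> set (filter P xs)" "b \<in> set (filter P xs)" using assms by auto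
  ultimately show ?thesis by (metis singletonD)
qed

lemma chk_sound:
  assumes C: "chk pts grp blks"
  shows "is_4GDD (set pts) ((\<lambda>c. {x \<in> set pts. grp x = c}) ` grp ` set pts) (set ` set blks)"
proof -
  have ne: "blks \<noteq> []"
    and bl: "\<And>b. b \<in> set blks \<Longrightarrow> length b = 4 \<and> distinct b \<and> set b \<subseteq> set pts \<and> distinct (map grp b)"
    and cv: "\<And>x y. x \<in> set pts \<Longrightarrow> y \<in> set pts \<Longrightarrow> grp x \<noteq> grp y \<Longrightarrow> length (filter (\<lambda>b. x \<in> set b \<and> y \<in> set b) blks) = 1"
    using C unfolding chk_def by blast+
  show ?thesis
  proof (rule G4_intro)
    show "finite (set pts)" by simp
    show "\<forall>g\<in>(\<lambda>c. {x \<in> set pts. grp x = c}) ` grp ` set pts. g \<noteq> {} \<and> g \<subseteq> set pts" by auto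
    show "\<forall>g\<in>(\<lambda>c. {x \<in> set pts. grp x = c}) ` grp ` set pts. \<forall>h\<in>(\<lambda>c. {x \<in> set pts. grp x = c}) ` grp ` set pts. g \<noteq> h \<longrightarrow> g \<inter> h = {}"
      by auto
    show "\<Union> ((\<lambda>c. {x \<in> set pts. grp x = c}) ` grp ` set pts) = set pts" by auto
    show "set ` set blks \<noteq> {}" using ne by simp
    show "\<forall>b\<in>set ` set blks. b \<subseteq> set pts \<and> card b = 4"
      using bl by (auto simp: distinct_card)
    show "\<forall>x\<in>set pts. \<forall>y\<in>set pts. (\<forall>g\<in>(\<lambda>c. {x \<in> set pts. grp x = c}) ` grp ` set pts. \<not> (x \<in> g \<and> y \<in> g)) \<longrightarrow>
       (\<exists>!b. b \<in> set ` set blks \<and> x \<in> b \<and> y \<in> b)"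
    proof (intro ballI impI)
      fix x y assume x: "x \<in> set pts" and y: "y \<in> set pts"
        and ng: "\<forall>g\<in>(\<lambda>c. {x \<in> set pts. grp x = c}) ` grp ` set pts. \<not> (x \<in> g \<and> y \<in> g)"
      have gne: "grp x \<noteq> grp y"
      proof
        assume "grp x = grp y"
        then have "x \<in> {z \<in> set pts. grp z = grp x} \<and> y \<in> {z \<in> set pts. grp z = grp x}" using x y by auto
        moreover have "{z \<in> set pts. grp z = grp x} \<in> (\<lambda>c. {x \<in> set pts. grp x = c}) ` grp ` set pts" using x by auto
        ultimately show False using ng by blast
      qed
      have l1: "length (filter (\<lambda>b. x \<in> set b \<and> y \<in> set b) blks) = 1" using cv[OF x y gne] .
      then have "filter (\<lambda>b. x \<in> set b \<and> y \<in> set b) blks \<noteq> []" by auto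
      then obtain b0 where b0: "b0 \<in> set blks" "x \<in> set b0" "y \<in> set b0"
        by (metis (no_types, lifting) filter_False)
      show "\<exists>!b. b \<in> set ` set blks \<and> x \<in> b \<and> y \<in> b"
      proof
        show "set b0 \<in> set ` set blks \<and> x \<in> set b0 \<and> y \<in> set b0" using b0 by auto
      next
        fix b assume "b \<in> set ` set blks \<and> x \<in> b \<and> y \<in> b"
        then obtain b1 where b1: "b1 \<in> set blks" "b = set b1" "x \<in> set b1" "y \<in> set b1" by auto
        have "b1 = b0" using filter_len1[OF l1, of b1 b0] b1 b0 by blast
        then show "b = set b0" using b1 by simp
      qed
    qed
    show "\<forall>g\<in>(\<lambda>c. {x \<in> set pts. grp x = c}) ` grp ` set pts. \<forall>x\<in>g. \<forall>y\<in>g. x \<noteq> y \<longrightarrow> \<not> (\<exists>b\<in>set ` set blks. x \<in> b \<and> y \<in> b)"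
    proof (intro ballI impI notI)
      fix g x y assume g: "g \<in> (\<lambda>c. {x \<in> set pts. grp x = c}) ` grp ` set pts" and x: "x \<in> g" and y: "y \<in> g"
        and ne: "x \<noteq> y" and ex: "\<exists>b\<in>set ` set blks. x \<in> b \<and> y \<in> b"
      have eqg: "grp x = grp y" using g x y by auto
      obtain b1 where b1: "b1 \<in> set blks" "x \<in> set b1" "y \<in> set b1" using ex by auto
      have "inj_on grp (set b1)" using bl[OF b1(1)] distinct_map by blast
      then show False using b1 eqg ne inj_on_def by metis
    qed
  qed
qed

lemma chk4: "chk (tpts 4) (tgrp 4) T4"
  by code_simp
lemma chk34: "chk (tpts 4) (tgrp 3) T4"
  by code_simp
lemma chk5: "chk (tpts 5) (tgrp 4) T5"
  by code_simp
lemma chk56: "chk (tpts 7) (tgrp 5) T56"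
  by code_simp



type_synonym mpt = "(nat \<times> nat) + nat"
type_synonym bb = "(nat \<times> nat) list \<times> nat list"

definition sh :: "nat \<Rightarrow> nat \<times> nat \<Rightarrow> mpt" where
  "sh g p = Inl ((fst p + g) mod 31, snd p)"

definition dev :: "nat \<Rightarrow> bb \<Rightarrow> mpt set" where
  "dev g B = sh g ` set (fst B) \<union> Inr ` set (snd B)"

definition dl :: "nat \<Rightarrow> nat \<Rightarrow> bb \<Rightarrow> nat list" where
  "dl i j B = concat (map (\<lambda>p. map (\<lambda>q. (fst q + 31 - fst p) mod 31) (filter (\<lambda>q. snd q = j) (fst B))) (filter (\<lambda>p. snd p = i) (fst B)))"

definition diffs :: "bb list \<Rightarrow> nat \<Rightarrow> nat \<Rightarrow> nat list" where
  "diffs base i j = concat (map (dl i j) base)"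

definition ll :: "nat \<Rightarrow> bb \<Rightarrow> nat list" where
  "ll f B = (if f \<in> set (snd B) then map snd (fst B) else [])"

definition labs :: "bb list \<Rightarrow> nat \<Rightarrow> nat list" where
  "labs base f = concat (map (ll f) base)"

definition okb :: "nat \<Rightarrow> bb \<Rightarrow> bool" where
  "okb N B \<longleftrightarrow> (\<forall>p\<in>set (fst B). fst p < 31 \<and> snd p < 8) \<and> distinct (map snd (fst B)) \<and> distinct (snd B)
     \<and> (\<forall>f\<in>set (snd B). f < N) \<and> (length (fst B), length (snd B)) \<in> set [(3,1),(4,0),(4,1),(5,2)]"

definition goodbase :: "nat \<Rightarrow> bb list \<Rightarrow> bool" where
  "goodbase N base \<longleftrightarrow> base \<noteq> [] \<and> (\<forall>B\<in>set base. okb N B)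
     \<and> (\<forall>i\<in>set [0..<8]. \<forall>j\<in>set [0..<8]. i < j \<longrightarrow> sort (diffs base i j) = [0..<31])
     \<and> (\<forall>f\<in>set [0..<N]. sort (labs base f) = [0..<8])"

definition MP :: "nat \<Rightarrow> mpt set" where
  "MP N = Inl ` ({0..<31} \<times> {0..<8}) \<union> Inr ` {0..<N}"

definition Xg :: "nat \<Rightarrow> mpt set" where
  "Xg i = Inl ` ({0..<31} \<times> {i})"

definition GM :: "nat \<Rightarrow> mpt set set" where
  "GM N = Xg ` {0..<8} \<union> {Inr ` {0..<N}}"

definition MB :: "bb list \<Rightarrow> mpt set set" where
  "MB base = (\<lambda>x. dev (snd x) (fst x)) ` (set base \<times> {0..<31})"

lemma m62: "x < 62 \<Longrightarrow> (x::nat) mod 31 = (if x < 31 then x else x - 31)"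
  by (simp add: le_mod_geq)

lemma A1: "s < 31 \<Longrightarrow> v < (31::nat) \<Longrightarrow> (s + (v + 31 - s) mod 31) mod 31 = v"
  by (simp add: m62; arith)

lemma A2: "s < 31 \<Longrightarrow> t < 31 \<Longrightarrow> v < 31 \<Longrightarrow> w < (31::nat) \<Longrightarrow> (t + 31 - s) mod 31 = (w + 31 - v) mod 31
  \<Longrightarrow> (t + (v + 31 - s) mod 31) mod 31 = w"
  by (simp add: m62 split: if_splits; arith)

lemma A3: "s < 31 \<Longrightarrow> t < 31 \<Longrightarrow> g < (31::nat) \<Longrightarrow> (t + 31 - s) mod 31 = ((t + g) mod 31 + 31 - (s + g) mod 31) mod 31"
  by (simp add: m62 split: if_splits; arith)

lemma A4: "s < 31 \<Longrightarrow> g1 < 31 \<Longrightarrow> g2 < (31::nat) \<Longrightarrow> (s + g1) mod 31 = (s + g2) mod 31 \<Longrightarrow> g1 = g2"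
  by (simp add: m62 split: if_splits; arith)

lemma distinct_concat_unique:
  assumes "distinct (concat (map f xs))" "a \<in> set xs" "b \<in> set xs" "z \<in> set (f a)" "z \<in> set (f b)"
  shows "a = b"
  using assms
proof (induction xs)
  case Nil then show ?case by simp
next
  case (Cons x xs)
  have d: "distinct (f x)" "distinct (concat (map f xs))" "set (f x) \<inter> set (concat (map f xs)) = {}"
    using Cons.prems(1) by auto
  show ?case
  proof (cases "a = x")
    case True
    show ?thesis
    proof (cases "b = x")
      case True then show ?thesis using \<open>a = x\<close> by simp
    next
      case False
      then have "b \<in> set xs" using Cons.prems(3) by simp
      then have "z \<in> set (concat (map f xs))" using Cons.prems(5) by auto
      then show ?thesis using d(3) Cons.prems(4) True by auto
    qed
  next
    case False
    then have a: "a \<in> set xs" using Cons.prems(2) by simp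
    show ?thesis
    proof (cases "b = x")
      case True
      have "z \<in> set (concat (map f xs))" using a Cons.prems(4) by auto
      then show ?thesis using d(3) Cons.prems(5) True by auto
    next
      case False
      then have "b \<in> set xs" using Cons.prems(3) by simp
      then show ?thesis using Cons.IH[OF d(2) a _ Cons.prems(4) Cons.prems(5)] by simp
    qed
  qed
qed

lemma goodbase_D:
  assumes "goodbase N base"
  shows "base \<noteq> []" "\<And>B. B \<in> set base \<Longrightarrow> okb N B"
    "\<And>i j. i < j \<Longrightarrow> j < 8 \<Longrightarrow> sort (diffs base i j) = [0..<31]"
    "\<And>f. f < N \<Longrightarrow> sort (labs base f) = [0..<8]"
  using assms unfolding goodbase_def by auto

lemma okb_D:
  assumes "okb N B"
  shows "\<And>p. p \<in> set (fst B) \<Longrightarrow> fst p < 31 \<and> snd p < 8" "distinct (map snd (fst B))" "distinct (snd B)"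
    "\<And>f. f \<in> set (snd B) \<Longrightarrow> f < N"
    "(length (fst B), length (snd B)) \<in> set [(3,1),(4,0),(4,1),(5,2)]"
  using assms unfolding okb_def by auto

lemma lab_unique:
  assumes "distinct (map snd xs)" "p \<in> set xs" "q \<in> set xs" "snd p = snd q"
  shows "p = q"
  using assms by (metis distinct_map inj_onD)

lemma in_dev_Inl:
  "Inl x \<in> dev g B \<longleftrightarrow> (\<exists>p\<in>set (fst B). sh g p = Inl x)"
proof
  assume "Inl x \<in> dev g B" then show "\<exists>p\<in>set (fst B). sh g p = Inl x" unfolding dev_def by auto
next
  assume "\<exists>p\<in>set (fst B). sh g p = Inl x"
  then obtain p where "p \<in> set (fst B)" "sh g p = Inl x" by blast
  then show "Inl x \<in> dev g B" unfolding dev_def by (metis UnI1 image_eqI)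
qed

lemma in_dev_Inr:
  "Inr f \<in> dev g B \<longleftrightarrow> f \<in> set (snd B)"
  unfolding dev_def sh_def by auto

lemma sh_eq: "sh g p = Inl (v, i) \<longleftrightarrow> (fst p + g) mod 31 = v \<and> snd p = i"
  unfolding sh_def by auto

lemma mem_dl: "d \<in> set (dl i j B) \<longleftrightarrow> (\<exists>p\<in>set (fst B). \<exists>q\<in>set (fst B). snd p = i \<and> snd q = j \<and> d = (fst q + 31 - fst p) mod 31)"
  unfolding dl_def by force

lemma mem_ll: "i \<in> set (ll f B) \<longleftrightarrow> f \<in> set (snd B) \<and> (\<exists>p\<in>set (fst B). snd p = i)"
  unfolding ll_def by auto

lemma cover_XX:
  assumes G: "goodbase N base" and v: "v < 31" and w: "w < 31" and ij: "i < j" "j < 8"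
  shows "\<exists>!\<beta>. \<beta> \<in> MB base \<and> Inl (v, i) \<in> \<beta> \<and> Inl (w, j) \<in> \<beta>"
proof -
  define d where "d = (w + 31 - v) mod 31"
  have srt: "sort (diffs base i j) = [0..<31]" using goodbase_D(3)[OF G ij] .
  then have dset: "set (diffs base i j) = {0..<31}" by (metis set_sort set_upt)
  have ddist: "distinct (concat (map (dl i j) base))"
    using srt unfolding diffs_def by (metis distinct_sort distinct_upt)
  have "d \<in> set (diffs base i j)" using dset d_def by auto
  then obtain B where B: "B \<in> set base" "d \<in> set (dl i j B)" unfolding diffs_def by auto
  then obtain p q where pq: "p \<in> set (fst B)" "q \<in> set (fst B)" "snd p = i" "snd q = j" "d = (fst q + 31 - fst p) mod 31"
    using mem_dl by blast
  have okB: "okb N B" using goodbase_D(2)[OF G B(1)] .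
  have ps: "fst p < 31" "fst q < 31" using okb_D(1)[OF okB] pq(1,2) by auto
  define g where "g = (v + 31 - fst p) mod 31"
  have g31: "g < 31" unfolding g_def by simp
  have m1: "Inl (v, i) \<in> dev g B"
    unfolding in_dev_Inl using pq(1,3) A1[OF ps(1) v] by (auto simp: sh_eq g_def)
  have m2: "Inl (w, j) \<in> dev g B"
    unfolding in_dev_Inl using pq(2,4,5) A2[OF ps(1) ps(2) v w] d_def by (auto simp: sh_eq g_def)
  have inMB: "dev g B \<in> MB base" unfolding MB_def using B(1) g31 by force
  show ?thesis
  proof (rule ex1I[of _ "dev g B"])
    show "dev g B \<in> MB base \<and> Inl (v, i) \<in> dev g B \<and> Inl (w, j) \<in> dev g B" using inMB m1 m2 by blast
  next
    fix \<beta> assume a: "\<beta> \<in> MB base \<and> Inl (v, i) \<in> \<beta> \<and> Inl (w, j) \<in> \<beta>"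
    then obtain B' g' where B': "B' \<in> set base" "g' < 31" "\<beta> = dev g' B'" unfolding MB_def by auto
    have mv: "Inl (v, i) \<in> dev g' B'" using a B'(3) by simp
    obtain p' where p': "p' \<in> set (fst B')" "(fst p' + g') mod 31 = v" "snd p' = i"
      using mv[unfolded in_dev_Inl sh_eq] by blast
    have mw: "Inl (w, j) \<in> dev g' B'" using a B'(3) by simp
    obtain q' where q': "q' \<in> set (fst B')" "(fst q' + g') mod 31 = w" "snd q' = j"
      using mw[unfolded in_dev_Inl sh_eq] by blast
    have okB': "okb N B'" using goodbase_D(2)[OF G B'(1)] .
    have ps': "fst p' < 31" "fst q' < 31" using okb_D(1)[OF okB'] p'(1) q'(1) by auto
    have "d = (fst q' + 31 - fst p') mod 31"
      unfolding d_def using A3[OF ps'(1) ps'(2) B'(2)] p'(2) q'(2) by simp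
    then have "d \<in> set (dl i j B')" unfolding mem_dl using p' q' by blast
    then have BB: "B' = B" using distinct_concat_unique[OF ddist B'(1) B(1) _ B(2)] by blast
    have "p' = p" using lab_unique[OF okb_D(2)[OF okB] _ pq(1)] p'(1,3) pq(3) BB by metis
    then have "g' = g" using A4[OF ps(1) B'(2) g31] p'(2) A1[OF ps(1) v] unfolding g_def by simp
    then show "\<beta> = dev g B" using B'(3) BB by simp
  qed
qed

lemma cover_XO:
  assumes G: "goodbase N base" and v: "v < 31" and i: "i < 8" and f: "f < N"
  shows "\<exists>!\<beta>. \<beta> \<in> MB base \<and> Inl (v, i) \<in> \<beta> \<and> Inr f \<in> \<beta>"
proof -
  have srt: "sort (labs base f) = [0..<8]" using goodbase_D(4)[OF G f] .
  then have lset: "set (labs base f) = {0..<8}" by (metis set_sort set_upt)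
  have ldist: "distinct (concat (map (ll f) base))"
    using srt unfolding labs_def by (metis distinct_sort distinct_upt)
  have "i \<in> set (labs base f)" using lset i by auto
  then obtain B where B: "B \<in> set base" "i \<in> set (ll f B)" unfolding labs_def by auto
  then obtain p where p: "f \<in> set (snd B)" "p \<in> set (fst B)" "snd p = i"
    using mem_ll by blast
  have okB: "okb N B" using goodbase_D(2)[OF G B(1)] .
  have ps: "fst p < 31" using okb_D(1)[OF okB] p(2) by auto
  define g where "g = (v + 31 - fst p) mod 31"
  have g31: "g < 31" unfolding g_def by simp
  have m1: "Inl (v, i) \<in> dev g B"
    unfolding in_dev_Inl using p(2,3) A1[OF ps v] by (auto simp: sh_eq g_def)
  have m2: "Inr f \<in> dev g B" unfolding in_dev_Inr using p(1) .
  have inMB: "dev g B \<in> MB base" unfolding MB_def using B(1) g31 by force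
  show ?thesis
  proof (rule ex1I[of _ "dev g B"])
    show "dev g B \<in> MB base \<and> Inl (v, i) \<in> dev g B \<and> Inr f \<in> dev g B" using inMB m1 m2 by blast
  next
    fix \<beta> assume a: "\<beta> \<in> MB base \<and> Inl (v, i) \<in> \<beta> \<and> Inr f \<in> \<beta>"
    then obtain B' g' where B': "B' \<in> set base" "g' < 31" "\<beta> = dev g' B'" unfolding MB_def by auto
    have mv: "Inl (v, i) \<in> dev g' B'" using a B'(3) by simp
    obtain p' where p': "p' \<in> set (fst B')" "(fst p' + g') mod 31 = v" "snd p' = i"
      using mv[unfolded in_dev_Inl sh_eq] by blast
    have mf: "Inr f \<in> dev g' B'" using a B'(3) by simp
    have f': "f \<in> set (snd B')" using mf[unfolded in_dev_Inr] .
    then have "i \<in> set (ll f B')" unfolding mem_ll using p' by blast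
    then have BB: "B' = B" using distinct_concat_unique[OF ldist B'(1) B(1) _ B(2)] by blast
    have "p' = p" using lab_unique[OF okb_D(2)[OF okB] _ p(2)] p'(1,3) p(3) BB by metis
    then have "g' = g" using A4[OF ps B'(2) g31] p'(2) A1[OF ps v] unfolding g_def by simp
    then show "\<beta> = dev g B" using B'(3) BB by simp
  qed
qed



lemma MP_cases:
  assumes "p \<in> MP N"
  obtains v i where "p = Inl (v, i)" "v < 31" "i < 8" | f where "p = Inr f" "f < N"
  using assms unfolding MP_def by auto

lemma cover_all:
  assumes G: "goodbase N base" and p: "p \<in> MP N" and q: "q \<in> MP N"
    and ng: "\<forall>Gr\<in>GM N. \<not> (p \<in> Gr \<and> q \<in> Gr)"
  shows "\<exists>!\<beta>. \<beta> \<in> MB base \<and> p \<in> \<beta> \<and> q \<in> \<beta>"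
proof -
  have sym: "(\<exists>!\<beta>. \<beta> \<in> MB base \<and> p \<in> \<beta> \<and> q \<in> \<beta>) \<longleftrightarrow> (\<exists>!\<beta>. \<beta> \<in> MB base \<and> q \<in> \<beta> \<and> p \<in> \<beta>)"
    by metis
  have OmG: "Inr ` {0..<N} \<in> GM N" unfolding GM_def by simp
  have XgG: "\<And>i. i < 8 \<Longrightarrow> Xg i \<in> GM N" unfolding GM_def by simp
  show ?thesis
  proof (cases rule: MP_cases[OF p])
    case (1 v i)
    show ?thesis
    proof (cases rule: MP_cases[OF q])
      case (1 w j)
      have "i \<noteq> j"
      proof
        assume "i = j"
        then have "p \<in> Xg i \<and> q \<in> Xg i" using \<open>p = Inl (v, i)\<close> \<open>v < 31\<close> 1 unfolding Xg_def by auto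
        then show False using ng XgG \<open>i < 8\<close> by blast
      qed
      then show ?thesis
      proof (cases "i < j")
        case True
        then show ?thesis using cover_XX[OF G \<open>v < 31\<close> \<open>w < 31\<close> True \<open>j < 8\<close>] \<open>p = Inl (v, i)\<close> 1 by simp
      next
        case False
        then have "j < i" using \<open>i \<noteq> j\<close> by simp
        then show ?thesis using cover_XX[OF G \<open>w < 31\<close> \<open>v < 31\<close> _ \<open>i < 8\<close>] \<open>p = Inl (v, i)\<close> 1 sym by simp
      qed
    next
      case (2 f)
      then show ?thesis using cover_XO[OF G \<open>v < 31\<close> \<open>i < 8\<close> \<open>f < N\<close>] \<open>p = Inl (v, i)\<close> by simp
    qed
  next
    case (2 f)
    show ?thesis
    proof (cases rule: MP_cases[OF q])
      case (1 w j)
      then show ?thesis using cover_XO[OF G \<open>w < 31\<close> \<open>j < 8\<close> \<open>f < N\<close>] \<open>p = Inr f\<close> sym by simp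
    next
      case (2 f')
      then have "p \<in> Inr ` {0..<N} \<and> q \<in> Inr ` {0..<N}" using \<open>p = Inr f\<close> \<open>f < N\<close> by auto
      then show ?thesis using ng OmG by blast
    qed
  qed
qed


definition phi :: "nat \<Rightarrow> bb \<Rightarrow> nat \<Rightarrow> mpt" where
  "phi g B j = (if j < length (fst B) then sh g (fst B ! j) else Inr (snd B ! (j - length (fst B))))"

definition hh :: "nat \<Rightarrow> bb \<Rightarrow> nat \<times> nat \<Rightarrow> mpt \<times> nat" where
  "hh g B x = (phi g B (fst x), snd x)"

definition kk :: "bb \<Rightarrow> nat" where
  "kk B = length (fst B) + length (snd B)"

definition tbl :: "bb \<Rightarrow> (nat \<times> nat) list list" where
  "tbl B = (if kk B = 4 then T4 else if kk B = 5 then T5 else T56)"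

definition tgs :: "nat \<Rightarrow> nat \<Rightarrow> (nat \<times> nat) set set" where
  "tgs k0 k = (\<lambda>c. {x \<in> set (tpts k). tgrp k0 x = c}) ` tgrp k0 ` set (tpts k)"

definition IGB :: "nat \<Rightarrow> bb \<Rightarrow> (mpt \<times> nat) set set" where
  "IGB g B = (`) (hh g B) ` tgs (length (fst B)) (kk B)"

definition IBB :: "nat \<Rightarrow> bb \<Rightarrow> (mpt \<times> nat) set set" where
  "IBB g B = (`) (hh g B) ` set ` set (tbl B)"

lemma chk_B:
  assumes "okb N B"
  shows "chk (tpts (kk B)) (tgrp (length (fst B))) (tbl B)"
proof -
  have "(length (fst B), length (snd B)) \<in> set [(3,1),(4,0),(4,1),(5,2)]" using okb_D(5)[OF assms] .
  then consider "length (fst B) = 3" "length (snd B) = 1" | "length (fst B) = 4" "length (snd B) = 0"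
    | "length (fst B) = 4" "length (snd B) = 1" | "length (fst B) = 5" "length (snd B) = 2"
    by auto
  then show ?thesis
  proof cases
    case 1
    then have "kk B = 4" "tbl B = T4" unfolding kk_def tbl_def by simp_all
    then show ?thesis using chk34 1 by simp
  next
    case 2
    then have "kk B = 4" "tbl B = T4" unfolding kk_def tbl_def by simp_all
    then show ?thesis using chk4 2 by simp
  next
    case 3
    then have "kk B = 5" "tbl B = T5" unfolding kk_def tbl_def by simp_all
    then show ?thesis using chk5 3 by simp
  next
    case 4
    then have "kk B = 7" "tbl B = T56" unfolding kk_def tbl_def by simp_all
    then show ?thesis using chk56 4 by simp
  qed
qed

lemma set_tpts: "set (tpts k) = {0..<k} \<times> {0..<3}"
  unfolding tpts_def by auto

lemma phi_lt: "j < length (fst B) \<Longrightarrow> phi g B j = sh g (fst B ! j)"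
  unfolding phi_def by simp

lemma phi_ge: "\<not> j < length (fst B) \<Longrightarrow> phi g B j = Inr (snd B ! (j - length (fst B)))"
  unfolding phi_def by simp

lemma phi_inj:
  assumes "okb N B"
  shows "inj_on (phi g B) {0..<kk B}"
proof (rule inj_onI)
  fix j1 j2 assume j1: "j1 \<in> {0..<kk B}" and j2: "j2 \<in> {0..<kk B}" and e: "phi g B j1 = phi g B j2"
  have dl: "distinct (map snd (fst B))" and df: "distinct (snd B)" using okb_D[OF assms] by auto
  show "j1 = j2"
  proof (cases "j1 < length (fst B)")
    case True
    show ?thesis
    proof (cases "j2 < length (fst B)")
      case True2: True
      have "snd (fst B ! j1) = snd (fst B ! j2)" using e phi_lt[OF True] phi_lt[OF True2] unfolding sh_def by simp
      then have "map snd (fst B) ! j1 = map snd (fst B) ! j2" using True True2 by simp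
      moreover have "j1 < length (map snd (fst B))" "j2 < length (map snd (fst B))" using True True2 by auto
      ultimately show ?thesis using dl nth_eq_iff_index_eq by blast
    next
      case False
      then show ?thesis using e phi_lt[OF True] phi_ge[OF False] unfolding sh_def by simp
    qed
  next
    case False
    show ?thesis
    proof (cases "j2 < length (fst B)")
      case True
      then show ?thesis using e phi_lt[OF True] phi_ge[OF False] unfolding sh_def by simp
    next
      case False2: False
      have "snd B ! (j1 - length (fst B)) = snd B ! (j2 - length (fst B))"
        using e phi_ge[OF False] phi_ge[OF False2] by simp
      moreover have "j1 - length (fst B) < length (snd B)" "j2 - length (fst B) < length (snd B)"
        using j1 j2 False False2 unfolding kk_def by auto
      ultimately have "j1 - length (fst B) = j2 - length (fst B)" using df by (simp add: nth_eq_iff_index_eq)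
      then show ?thesis using False False2 by simp
    qed
  qed
qed

lemma phi_img: "phi g B ` {0..<kk B} = dev g B"
proof
  show "phi g B ` {0..<kk B} \<subseteq> dev g B"
  proof
    fix y assume "y \<in> phi g B ` {0..<kk B}"
    then obtain j where j: "j < kk B" "y = phi g B j" by auto
    show "y \<in> dev g B"
    proof (cases "j < length (fst B)")
      case True
      then show ?thesis using j phi_lt[OF True] unfolding dev_def by auto
    next
      case False
      then have "j - length (fst B) < length (snd B)" using j unfolding kk_def by auto
      then show ?thesis using j phi_ge[OF False] unfolding dev_def by auto
    qed
  qed
next
  show "dev g B \<subseteq> phi g B ` {0..<kk B}"
  proof
    fix y assume "y \<in> dev g B"
    then consider p where "p \<in> set (fst B)" "y = sh g p" | f where "f \<in> set (snd B)" "y = Inr f"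
      unfolding dev_def by auto
    then show "y \<in> phi g B ` {0..<kk B}"
    proof cases
      case 1
      then obtain j where "j < length (fst B)" "fst B ! j = p" by (metis in_set_conv_nth)
      then show ?thesis using 1 phi_lt unfolding kk_def by (metis atLeastLessThan_iff image_eqI le0 trans_less_add1)
    next
      case 2
      then obtain j where j: "j < length (snd B)" "snd B ! j = f" by (metis in_set_conv_nth)
      have "phi g B (length (fst B) + j) = y" using j 2 phi_ge[of "length (fst B) + j"] by simp
      moreover have "length (fst B) + j \<in> {0..<kk B}" using j unfolding kk_def by simp
      ultimately show ?thesis by (metis image_eqI)
    qed
  qed
qed

lemma dev_sub: "okb N B \<Longrightarrow> dev g B \<subseteq> MP N"
proof
  fix y assume ok: "okb N B" and y: "y \<in> dev g B"
  then consider p where "p \<in> set (fst B)" "y = sh g p" | f where "f \<in> set (snd B)" "y = Inr f"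
    unfolding dev_def by auto
  then show "y \<in> MP N"
  proof cases
    case 1
    then have "snd p < 8" using okb_D(1)[OF ok] by blast
    moreover have "(fst p + g) mod 31 < 31" by simp
    ultimately show ?thesis using 1 unfolding MP_def sh_def by auto
  next
    case 2
    then show ?thesis using okb_D(4)[OF ok] unfolding MP_def by auto
  qed
qed

lemma ingr:
  assumes "okb N B"
  shows "is_4GDD (dev g B \<times> {0..<3}) (IGB g B) (IBB g B)"
proof -
  have D: "is_4GDD (set (tpts (kk B))) (tgs (length (fst B)) (kk B)) (set ` set (tbl B))"
    using chk_sound[OF chk_B[OF assms]] unfolding tgs_def .
  have pi: "inj_on (phi g B) {0..<kk B}" using phi_inj[OF assms] .
  have inj: "inj_on (hh g B) (set (tpts (kk B)))"
  proof (rule inj_onI)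
    fix x y assume x: "x \<in> set (tpts (kk B))" and y: "y \<in> set (tpts (kk B))" and e: "hh g B x = hh g B y"
    have "phi g B (fst x) = phi g B (fst y)" "snd x = snd y" using e unfolding hh_def by auto
    moreover have "fst x \<in> {0..<kk B}" "fst y \<in> {0..<kk B}" using x y unfolding set_tpts by auto
    ultimately have "fst x = fst y" "snd x = snd y" using inj_onD[OF pi] by auto
    then show "x = y" by (simp add: prod_eq_iff)
  qed
  have gen: "\<And>(f :: nat \<Rightarrow> mpt) (A :: nat set) (C :: nat set). (\<lambda>x. (f (fst x), snd x)) ` (A \<times> C) = f ` A \<times> C"
    by force
  have img: "hh g B ` set (tpts (kk B)) = dev g B \<times> {0..<3}"
  proof -
    have "hh g B = (\<lambda>x. (phi g B (fst x), snd x))" unfolding hh_def by (rule ext) simp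
    then show ?thesis unfolding set_tpts using gen phi_img by metis
  qed
  show ?thesis using is_4GDD_image[OF D inj] unfolding img IGB_def IBB_def .
qed


lemma UGM: "\<Union>(GM N) = MP N"
  unfolding GM_def MP_def Xg_def by auto

lemma phi_Inl: "j < kk B \<Longrightarrow> phi g B j = Inl x \<Longrightarrow> j < length (fst B)"
  unfolding phi_def by (auto split: if_splits)

lemma phi_Inr: "j < kk B \<Longrightarrow> phi g B j = Inr f \<Longrightarrow> \<not> j < length (fst B) \<and> f \<in> set (snd B)"
  unfolding phi_def sh_def kk_def by (auto split: if_splits)

lemma igsub_B:
  assumes ok: "okb N B"
  shows "\<forall>gr\<in>IGB g B. \<forall>x\<in>gr. \<forall>y\<in>gr. \<exists>G\<in>GM N. fst x \<in> G \<and> fst y \<in> G"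
proof (intro ballI)
  fix gr x y assume gr: "gr \<in> IGB g B" and x: "x \<in> gr" and y: "y \<in> gr"
  define k0 where "k0 = length (fst B)"
  obtain gr0 where gr0: "gr0 \<in> tgs k0 (kk B)" "gr = hh g B ` gr0"
    using gr unfolding IGB_def k0_def by (rule imageE) simp
  obtain c where gc0: "gr0 = {z \<in> set (tpts (kk B)). tgrp k0 z = c}"
    using gr0(1) unfolding tgs_def by (rule imageE) simp
  have gc: "gr = hh g B ` {z \<in> set (tpts (kk B)). tgrp k0 z = c}" using gr0(2) gc0 by simp
  obtain z1 where z1: "z1 \<in> set (tpts (kk B))" "tgrp k0 z1 = c" "x = hh g B z1" using x gc by auto
  obtain z2 where z2: "z2 \<in> set (tpts (kk B))" "tgrp k0 z2 = c" "y = hh g B z2" using y gc by auto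
  have fx: "fst x = phi g B (fst z1)" "fst y = phi g B (fst z2)" using z1 z2 unfolding hh_def by auto
  have lt: "fst z1 < kk B" "fst z2 < kk B" using z1 z2 unfolding set_tpts by auto
  have mm: "min (fst z1) k0 = min (fst z2) k0" using z1(2) z2(2) unfolding tgrp_def by simp
  show "\<exists>G\<in>GM N. fst x \<in> G \<and> fst y \<in> G"
  proof (cases "fst z1 < k0")
    case True
    then have "fst z2 = fst z1" using mm by (simp add: min_def split: if_splits)
    then have "fst x = fst y" using fx by simp
    moreover have "phi g B (fst z1) \<in> dev g B" using phi_img[of g B] lt(1) by auto
    then have "fst x \<in> MP N" using fx(1) dev_sub[OF ok] by auto
    then have "fst x \<in> \<Union>(GM N)" by (simp only: UGM)
    then obtain G where "G \<in> GM N" "fst x \<in> G" by (rule UnionE)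
    ultimately show ?thesis by auto
  next
    case False
    then have "\<not> fst z2 < k0" using mm by (simp add: min_def split: if_splits)
    then have "fst y = Inr (snd B ! (fst z2 - k0))" "fst x = Inr (snd B ! (fst z1 - k0))"
      using fx False phi_ge unfolding k0_def by auto
    moreover have "fst z2 - k0 < length (snd B)" "fst z1 - k0 < length (snd B)"
      using lt False \<open>\<not> fst z2 < k0\<close> unfolding kk_def k0_def by auto
    ultimately have "fst x \<in> Inr ` {0..<N}" "fst y \<in> Inr ` {0..<N}" using okb_D(4)[OF ok] by auto
    moreover have "Inr ` {0..<N} \<in> GM N" unfolding GM_def by simp
    ultimately show ?thesis by blast
  qed
qed

lemma igsame_B:
  assumes ok: "okb N B"
  shows "\<forall>G\<in>GM N. \<forall>p\<in>dev g B \<inter> G. \<forall>q\<in>dev g B \<inter> G. \<forall>a<3. \<forall>b<3. \<exists>gr\<in>IGB g B. (p, a) \<in> gr \<and> (q, b) \<in> gr"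
proof (intro ballI allI impI)
  fix G p q a b assume G: "G \<in> GM N" and p: "p \<in> dev g B \<inter> G" and q: "q \<in> dev g B \<inter> G"
    and a: "a < (3::nat)" and b: "b < (3::nat)"
  define k0 where "k0 = length (fst B)"
  obtain j1 where j1: "j1 < kk B" "p = phi g B j1" using p phi_img[of g B] by (metis IntD1 atLeastLessThan_iff imageE)
  obtain j2 where j2: "j2 < kk B" "q = phi g B j2" using q phi_img[of g B] by (metis IntD1 atLeastLessThan_iff imageE)
  have grp_in: "\<And>c. c \<in> tgrp k0 ` set (tpts (kk B)) \<Longrightarrow> hh g B ` {z \<in> set (tpts (kk B)). tgrp k0 z = c} \<in> IGB g B"
    unfolding IGB_def tgs_def k0_def by blast
  have tA: "(j1, a) \<in> set (tpts (kk B))" "(j2, b) \<in> set (tpts (kk B))" using j1 j2 a b unfolding set_tpts by auto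
  have hA: "hh g B (j1, a) = (p, a)" "hh g B (j2, b) = (q, b)" using j1 j2 unfolding hh_def by auto
  have "G \<in> Xg ` {0..<8} \<or> G = Inr ` {0..<N}" using G unfolding GM_def by auto
  then show "\<exists>gr\<in>IGB g B. (p, a) \<in> gr \<and> (q, b) \<in> gr"
  proof
    assume "G \<in> Xg ` {0..<8}"
    then obtain i where Gi: "G = Xg i" by auto
    obtain x1 where x1: "p = Inl x1" "snd x1 = i" using p Gi unfolding Xg_def by auto
    obtain x2 where x2: "q = Inl x2" "snd x2 = i" using q Gi unfolding Xg_def by auto
    have l1: "j1 < k0" using phi_Inl[OF j1(1)] j1(2) x1(1) unfolding k0_def by metis
    have l2: "j2 < k0" using phi_Inl[OF j2(1)] j2(2) x2(1) unfolding k0_def by metis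
    have "snd (fst B ! j1) = i" using j1(2) x1 phi_lt l1 unfolding k0_def sh_def by auto
    moreover have "snd (fst B ! j2) = i" using j2(2) x2 phi_lt l2 unfolding k0_def sh_def by auto
    ultimately have "map snd (fst B) ! j1 = map snd (fst B) ! j2" using l1 l2 unfolding k0_def by simp
    moreover have "j1 < length (map snd (fst B))" "j2 < length (map snd (fst B))" using l1 l2 unfolding k0_def by auto
    ultimately have jj: "j1 = j2" using okb_D(2)[OF ok] nth_eq_iff_index_eq by blast
    have tg: "tgrp k0 (j1, a) = j1" "tgrp k0 (j2, b) = j1" using l1 jj unfolding tgrp_def by auto
    let ?gr = "hh g B ` {z \<in> set (tpts (kk B)). tgrp k0 z = j1}"
    have "j1 \<in> tgrp k0 ` set (tpts (kk B))" by (rule image_eqI[where f="tgrp k0", OF tg(1)[symmetric] tA(1)])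
    then have m1: "?gr \<in> IGB g B" by (rule grp_in)
    have m2: "(p, a) \<in> ?gr" by (rule image_eqI[where f="hh g B", OF hA(1)[symmetric]]) (simp add: tA(1) tg(1))
    have m3: "(q, b) \<in> ?gr" by (rule image_eqI[where f="hh g B", OF hA(2)[symmetric]]) (simp add: tA(2) tg(2))
    show ?thesis
    proof (rule bexI)
      show "(p, a) \<in> ?gr \<and> (q, b) \<in> ?gr" using m2 m3 by (rule conjI)
      show "?gr \<in> IGB g B" by (rule m1)
    qed
  next
    assume Go: "G = Inr ` {0..<N}"
    obtain f1 where f1: "p = Inr f1" using p Go by auto
    obtain f2 where f2: "q = Inr f2" using q Go by auto
    have l1: "\<not> j1 < k0" using phi_Inr[OF j1(1)] j1(2) f1 unfolding k0_def by metis
    have l2: "\<not> j2 < k0" using phi_Inr[OF j2(1)] j2(2) f2 unfolding k0_def by metis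
    have tg: "tgrp k0 (j1, a) = k0" "tgrp k0 (j2, b) = k0" using l1 l2 unfolding tgrp_def by auto
    let ?gr = "hh g B ` {z \<in> set (tpts (kk B)). tgrp k0 z = k0}"
    have "k0 \<in> tgrp k0 ` set (tpts (kk B))" by (rule image_eqI[where f="tgrp k0", OF tg(1)[symmetric] tA(1)])
    then have m1: "?gr \<in> IGB g B" by (rule grp_in)
    have m2: "(p, a) \<in> ?gr" by (rule image_eqI[where f="hh g B", OF hA(1)[symmetric]]) (simp add: tA(1) tg(1))
    have m3: "(q, b) \<in> ?gr" by (rule image_eqI[where f="hh g B", OF hA(2)[symmetric]]) (simp add: tA(2) tg(2))
    show ?thesis
    proof (rule bexI)
      show "(p, a) \<in> ?gr \<and> (q, b) \<in> ?gr" using m2 m3 by (rule conjI)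
      show "?gr \<in> IGB g B" by (rule m1)
    qed
  qed
qed


definition sel :: "bb list \<Rightarrow> mpt set \<Rightarrow> bb \<times> nat" where
  "sel base \<beta> = (SOME x. x \<in> set base \<times> {0..<31} \<and> \<beta> = dev (snd x) (fst x))"

lemma sel_prop:
  assumes "\<beta> \<in> MB base"
  shows "sel base \<beta> \<in> set base \<times> {0..<31} \<and> \<beta> = dev (snd (sel base \<beta>)) (fst (sel base \<beta>))"
proof -
  have "\<exists>x. x \<in> set base \<times> {0..<31} \<and> \<beta> = dev (snd x) (fst x)" using assms unfolding MB_def by blast
  then show ?thesis unfolding sel_def by (rule someI_ex)
qed

definition IGm :: "bb list \<Rightarrow> mpt set \<Rightarrow> (mpt \<times> nat) set set" where
  "IGm base \<beta> = IGB (snd (sel base \<beta>)) (fst (sel base \<beta>))"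

definition Im :: "bb list \<Rightarrow> mpt set \<Rightarrow> (mpt \<times> nat) set set" where
  "Im base \<beta> = IBB (snd (sel base \<beta>)) (fst (sel base \<beta>))"

lemma master_gdd:
  assumes G: "goodbase N base" and N: "0 < N"
  shows "is_4GDD (MP N \<times> {0..<3}) ((\<lambda>Gr. Gr \<times> {0..<3}) ` GM N) (\<Union>\<beta>\<in>MB base. Im base \<beta>)"
proof (rule wilson3)
  show "finite (MP N)" unfolding MP_def by simp
  show "\<forall>Gr\<in>GM N. Gr \<noteq> {} \<and> Gr \<subseteq> MP N"
    using N unfolding GM_def MP_def Xg_def by auto
  show "\<forall>Gr\<in>GM N. \<forall>G'\<in>GM N. Gr \<noteq> G' \<longrightarrow> Gr \<inter> G' = {}"
    unfolding GM_def Xg_def by auto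
  show "\<Union> (GM N) = MP N" by (rule UGM)
  show "MB base \<noteq> {}" using goodbase_D(1)[OF G] unfolding MB_def by auto
  show "\<forall>\<beta>\<in>MB base. \<beta> \<subseteq> MP N"
  proof
    fix \<beta> assume b: "\<beta> \<in> MB base"
    then obtain B g where "B \<in> set base" "\<beta> = dev g B" unfolding MB_def by auto
    then show "\<beta> \<subseteq> MP N" using dev_sub goodbase_D(2)[OF G] by blast
  qed
  show "\<forall>p\<in>MP N. \<forall>q\<in>MP N. (\<forall>Gr\<in>GM N. \<not> (p \<in> Gr \<and> q \<in> Gr)) \<longrightarrow> (\<exists>!\<beta>. \<beta> \<in> MB base \<and> p \<in> \<beta> \<and> q \<in> \<beta>)"
    by (intro ballI impI) (rule cover_all[OF G])
  show "\<forall>\<beta>\<in>MB base. is_4GDD (\<beta> \<times> {0..<3}) (IGm base \<beta>) (Im base \<beta>)"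
  proof
    fix \<beta> assume b: "\<beta> \<in> MB base"
    note sp = sel_prop[OF b]
    have ok: "okb N (fst (sel base \<beta>))" using sp goodbase_D(2)[OF G] by (simp add: mem_Times_iff)
    have e: "dev (snd (sel base \<beta>)) (fst (sel base \<beta>)) = \<beta>" using sp by simp
    show "is_4GDD (\<beta> \<times> {0..<3}) (IGm base \<beta>) (Im base \<beta>)"
      using ingr[OF ok, of "snd (sel base \<beta>)"] unfolding IGm_def Im_def e .
  qed
  show "\<forall>\<beta>\<in>MB base. \<forall>g\<in>IGm base \<beta>. \<forall>x\<in>g. \<forall>y\<in>g. \<exists>Gr\<in>GM N. fst x \<in> Gr \<and> fst y \<in> Gr"
  proof
    fix \<beta> assume b: "\<beta> \<in> MB base"
    note sp = sel_prop[OF b]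
    have ok: "okb N (fst (sel base \<beta>))" using sp goodbase_D(2)[OF G] by (simp add: mem_Times_iff)
    show "\<forall>g\<in>IGm base \<beta>. \<forall>x\<in>g. \<forall>y\<in>g. \<exists>Gr\<in>GM N. fst x \<in> Gr \<and> fst y \<in> Gr"
      using igsub_B[OF ok, of "snd (sel base \<beta>)"] unfolding IGm_def .
  qed
  show "\<forall>\<beta>\<in>MB base. \<forall>Gr\<in>GM N. \<forall>p\<in>\<beta> \<inter> Gr. \<forall>q\<in>\<beta> \<inter> Gr. \<forall>a<3. \<forall>b<3. \<exists>g\<in>IGm base \<beta>. (p, a) \<in> g \<and> (q, b) \<in> g"
  proof
    fix \<beta> assume b: "\<beta> \<in> MB base"
    note sp = sel_prop[OF b]
    have ok: "okb N (fst (sel base \<beta>))" using sp goodbase_D(2)[OF G] by (simp add: mem_Times_iff)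
    have e: "dev (snd (sel base \<beta>)) (fst (sel base \<beta>)) = \<beta>" using sp by simp
    show "\<forall>Gr\<in>GM N. \<forall>p\<in>\<beta> \<inter> Gr. \<forall>q\<in>\<beta> \<inter> Gr. \<forall>a<3. \<forall>b<3. \<exists>g\<in>IGm base \<beta>. (p, a) \<in> g \<and> (q, b) \<in> g"
      using igsame_B[OF ok, of "snd (sel base \<beta>)"] unfolding IGm_def e .
  qed
qed

lemma card_Xg: "card (Xg i \<times> {0..<3::nat}) = 93"
proof -
  have "card (Xg i) = 31" unfolding Xg_def by (simp add: card_image card_cartesian_product)
  then show ?thesis by (simp add: card_cartesian_product)
qed

lemma type_calc:
  assumes N: "0 < N"
  shows "gdd_type ((\<lambda>Gr. Gr \<times> {0..<3::nat}) ` GM N) = replicate_mset 8 93 + {#3 * N#}"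
proof -
  let ?F = "\<lambda>Gr. Gr \<times> {0..<3::nat}"
  let ?O = "Inr ` {0..<N} :: mpt set"
  have e1: "?F ` GM N = (?F \<circ> Xg) ` {0..<8} \<union> {?F ?O}" unfolding GM_def by auto
  have nin: "?F ?O \<notin> (?F \<circ> Xg) ` {0..<8}"
  proof
    assume "?F ?O \<in> (?F \<circ> Xg) ` {0..<8}"
    then obtain i where "?F ?O = ?F (Xg i)" by auto
    moreover have "(Inr 0, 0) \<in> ?F ?O" using N by auto
    moreover have "(Inr 0, 0) \<notin> ?F (Xg i)" unfolding Xg_def by auto
    ultimately show False by simp
  qed
  have inj: "inj_on (?F \<circ> Xg) {0..<8}"
  proof (rule inj_onI)
    fix i j assume "i \<in> {0..<8::nat}" "j \<in> {0..<8::nat}" "(?F \<circ> Xg) i = (?F \<circ> Xg) j"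
    moreover have "(Inl (0, i), 0) \<in> (?F \<circ> Xg) i" unfolding Xg_def by auto
    ultimately have "(Inl (0, i), 0) \<in> (?F \<circ> Xg) j" by simp
    then show "i = j" unfolding Xg_def by auto
  qed
  have m1: "mset_set (?F ` GM N) = image_mset (?F \<circ> Xg) (mset_set {0..<8}) + {#?F ?O#}"
    unfolding e1 using nin by (subst mset_set_Union) (auto simp: image_mset_mset_set[OF inj])
  have c1: "image_mset card (image_mset (?F \<circ> Xg) (mset_set {0..<8::nat})) = replicate_mset 8 93"
  proof -
    have "image_mset card (image_mset (?F \<circ> Xg) (mset_set {0..<8::nat})) = image_mset (\<lambda>_. 93::nat) (mset_set {0..<8::nat})"
      by (simp add: multiset.map_comp comp_def card_Xg)
    also have "\<dots> = replicate_mset 8 93" by (simp add: image_mset_const_eq)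
    finally show ?thesis .
  qed
  have c2: "card (?F ?O) = 3 * N" by (simp add: card_cartesian_product card_image)
  show ?thesis unfolding gdd_type_def m1 using c1 c2 by simp
qed

lemma main_gdd:
  assumes G: "goodbase N base" and N: "0 < N"
  shows "has_4GDD_of_type (replicate_mset 8 93 + {#3 * N#})"
proof -
  let ?V = "MP N \<times> {0..<3::nat}"
  let ?G = "(\<lambda>Gr. Gr \<times> {0..<3::nat}) ` GM N"
  let ?B = "\<Union>\<beta>\<in>MB base. Im base \<beta>"
  have D: "is_4GDD ?V ?G ?B" by (rule master_gdd[OF G N])
  have inj: "inj_on (to_nat :: mpt \<times> nat \<Rightarrow> nat) ?V" by (rule inj_on_subset[OF inj_to_nat subset_UNIV])
  have D2: "is_4GDD (to_nat ` ?V) ((`) to_nat ` ?G) ((`) to_nat ` ?B)" by (rule is_4GDD_image[OF D inj])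
  have T: "gdd_type ((`) (to_nat :: mpt \<times> nat \<Rightarrow> nat) ` ?G) = replicate_mset 8 93 + {#3 * N#}"
  proof -
    have "gdd_type ((`) (to_nat :: mpt \<times> nat \<Rightarrow> nat) ` ?G) = gdd_type ?G" by (rule gdd_type_image[OF inj_to_nat])
    then show ?thesis using type_calc[OF N] by simp
  qed
  show ?thesis unfolding has_4GDD_of_type_def using D2 T by blast
qed



definition base321 :: "bb list" where
  "base321 = [([(0,0), (18,1), (16,2), (18,3), (2,4)], [0, 1]),
   ([(0,5), (0,6), (28,7)], [0]),
   ([(0,5), (29,6), (0,7)], [1]),
   ([(0,0), (2,1), (25,2), (11,3), (18,5)], [2, 3]),
   ([(0,4), (28,6), (9,7)], [2]),
   ([(0,4), (2,6), (5,7)], [3]),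
   ([(0,0), (13,1), (22,2), (28,3), (14,6)], [4, 5]),
   ([(0,4), (5,5), (14,7)], [4]),
   ([(0,4), (16,5), (17,7)], [5]),
   ([(0,0), (12,1), (5,2), (5,3), (19,7)], [6, 7]),
   ([(0,4), (12,5), (13,6)], [6]),
   ([(0,4), (29,5), (8,6)], [7]),
   ([(0,0), (25,1), (26,2), (17,4), (1,5)], [8, 9]),
   ([(0,3), (4,6), (17,7)], [8]),
   ([(0,3), (20,6), (3,7)], [9]),
   ([(0,0), (19,1), (30,2), (13,4), (4,6)], [10, 11]),
   ([(0,3), (25,5), (10,7)], [10]),
   ([(0,3), (4,5), (2,7)], [11]),
   ([(0,0), (17,1), (14,2), (30,4), (2,7)], [12, 13]),
   ([(0,3), (22,5), (19,6)], [12]),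
   ([(0,3), (21,5), (12,6)], [13]),
   ([(0,0), (15,1), (3,2), (25,5), (12,6)], [14, 15]),
   ([(0,3), (2,4), (22,7)], [14]),
   ([(0,3), (4,4), (0,7)], [15]),
   ([(0,0), (8,1), (20,2), (10,5), (29,7)], [16, 17]),
   ([(0,3), (21,4), (15,6)], [16]),
   ([(0,3), (0,4), (27,6)], [17]),
   ([(0,0), (22,1), (4,2), (8,6), (8,7)], [18, 19]),
   ([(0,3), (24,4), (30,5)], [18]),
   ([(0,3), (27,4), (5,5)], [19]),
   ([(0,0), (4,1), (30,3), (28,4), (27,5)], [20, 21]),
   ([(0,2), (14,6), (23,7)], [20]),
   ([(0,2), (1,6), (7,7)], [21]),
   ([(0,0), (7,1), (10,3), (19,4), (18,6)], [22, 23]),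
   ([(0,2), (17,5), (21,7)], [22]),
   ([(0,2), (3,5), (8,7)], [23]),
   ([(0,0), (23,1), (17,3), (0,4), (1,7)], [24, 25]),
   ([(0,2), (25,5), (24,6)], [24]),
   ([(0,2), (23,5), (29,6)], [25]),
   ([(0,0), (27,1), (29,3), (7,5), (0,6)], [26, 27]),
   ([(0,2), (1,4), (29,7)], [26]),
   ([(0,2), (26,4), (20,7)], [27]),
   ([(0,0), (9,1), (26,3), (14,5), (13,7)], [28, 29]),
   ([(0,2), (29,4), (30,6)], [28]),
   ([(0,2), (3,4), (22,6)], [29]),
   ([(0,0), (30,1), (9,3), (20,6), (18,7)], [30, 31]),
   ([(0,2), (27,4), (20,5)], [30]),
   ([(0,2), (19,4), (30,5)], [31]),
   ([(0,0), (21,1), (4,4), (11,5), (16,6)], [32, 33]),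
   ([(0,2), (3,3), (26,7)], [32]),
   ([(0,2), (23,3), (27,7)], [33]),
   ([(0,0), (0,1), (6,4), (29,5), (24,7)], [34, 35]),
   ([(0,2), (16,3), (6,6)], [34]),
   ([(0,2), (19,3), (10,6)], [35]),
   ([(0,0), (10,1), (5,4), (28,6), (5,7)], [36, 37]),
   ([(0,2), (22,3), (4,5)], [36]),
   ([(0,2), (9,3), (19,5)], [37]),
   ([(0,0), (6,1), (19,5), (9,6), (3,7)], [38, 39]),
   ([(0,2), (12,3), (9,4)], [38]),
   ([(0,2), (20,3), (6,4)], [39]),
   ([(0,0), (7,2), (12,3), (7,4), (4,5)], [40, 41]),
   ([(0,1), (19,6), (18,7)], [40]),
   ([(0,1), (22,6), (29,7)], [41]),
   ([(0,0), (23,2), (24,3), (27,4), (7,6)], [42, 43]),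
   ([(0,1), (30,5), (22,7)], [42]),
   ([(0,1), (12,5), (14,7)], [43]),
   ([(0,0), (9,2), (19,3), (24,4), (15,7)], [44, 45]),
   ([(0,1), (18,5), (30,6)], [44]),
   ([(0,1), (27,5), (9,6)], [45]),
   ([(0,0), (17,2), (14,3), (30,5), (6,6)], [46, 47]),
   ([(0,1), (7,4), (13,7)], [46]),
   ([(0,1), (2,4), (6,7)], [47]),
   ([(0,0), (24,2), (20,3), (20,5), (27,7)], [48, 49]),
   ([(0,1), (21,4), (27,6)], [48]),
   ([(0,1), (17,4), (2,6)], [49]),
   ([(0,0), (2,2), (1,3), (19,6), (30,7)], [50, 51]),
   ([(0,1), (5,4), (26,5)], [50]),
   ([(0,1), (3,4), (3,5)], [51]),
   ([(0,0), (8,2), (18,4), (6,5), (21,6)], [52, 53]),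
   ([(0,1), (16,3), (5,7)], [52]),
   ([(0,1), (27,3), (20,7)], [53]),
   ([(0,0), (18,2), (29,4), (23,5), (0,7)], [54, 55]),
   ([(0,1), (8,3), (8,6)], [54]),
   ([(0,1), (12,3), (25,6)], [55]),
   ([(0,0), (29,2), (21,4), (10,6), (14,7)], [56, 57]),
   ([(0,1), (19,3), (0,5)], [56]),
   ([(0,1), (30,3), (1,5)], [57]),
   ([(0,0), (10,2), (26,5), (29,6), (20,7)], [58, 59]),
   ([(0,1), (29,3), (18,4)], [58]),
   ([(0,1), (4,3), (20,4)], [59]),
   ([(0,0), (0,3), (11,4), (24,5), (26,6)], [60, 61]),
   ([(0,1), (3,2), (2,7)], [60]),
   ([(0,1), (0,2), (1,7)], [61]),
   ([(0,0), (22,3), (16,4), (2,5), (23,7)], [62, 63]),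
   ([(0,1), (16,2), (6,6)], [62]),
   ([(0,1), (4,2), (12,6)], [63]),
   ([(0,0), (7,3), (8,4), (13,6), (6,7)], [64, 65]),
   ([(0,1), (25,2), (4,5)], [64]),
   ([(0,1), (30,2), (8,5)], [65]),
   ([(0,0), (25,3), (8,5), (3,6), (22,7)], [66, 67]),
   ([(0,1), (20,2), (27,4)], [66]),
   ([(0,1), (21,2), (29,4)], [67]),
   ([(0,1), (15,2), (22,3), (9,4), (17,5)], [68, 69]),
   ([(0,0), (23,6), (9,7)], [68]),
   ([(0,0), (15,6), (11,7)], [69]),
   ([(0,1), (8,2), (21,3), (28,4), (15,6)], [70, 71]),
   ([(0,0), (17,5), (10,7)], [70]),
   ([(0,0), (5,5), (17,7)], [71]),
   ([(0,1), (26,2), (6,3), (16,4), (0,7)], [72, 73]),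
   ([(0,0), (16,5), (27,6)], [72]),
   ([(0,0), (22,5), (5,6)], [73]),
   ([(0,1), (5,2), (13,3), (19,5), (23,6)], [74, 75]),
   ([(0,0), (26,4), (21,7)], [74]),
   ([(0,0), (25,4), (4,7)], [75]),
   ([(0,1), (22,2), (20,3), (9,5), (15,7)], [76, 77]),
   ([(0,0), (12,4), (2,6)], [76]),
   ([(0,0), (23,4), (30,6)], [77]),
   ([(0,1), (27,2), (14,3), (7,6), (27,7)], [78, 79]),
   ([(0,0), (1,4), (15,5)], [78]),
   ([(0,0), (10,4), (12,5)], [79]),
   ([(0,1), (2,2), (1,4), (28,5), (5,6)], [80, 81]),
   ([(0,0), (4,3), (16,7)], [80]),
   ([(0,0), (6,3), (25,7)], [81]),
   ([(0,1), (7,2), (4,4), (22,5), (25,7)], [82, 83]),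
   ([(0,0), (3,3), (1,6)], [82]),
   ([(0,0), (27,3), (24,6)], [83]),
   ([(0,1), (18,2), (11,4), (20,6), (30,7)], [84, 85]),
   ([(0,0), (13,3), (21,5)], [84]),
   ([(0,0), (2,3), (3,5)], [85]),
   ([(0,1), (6,2), (6,5), (0,6), (23,7)], [86, 87]),
   ([(0,0), (21,3), (3,4)], [86]),
   ([(0,0), (16,3), (22,4)], [87]),
   ([(0,1), (11,3), (10,4), (14,5), (10,6)], [88, 89]),
   ([(0,0), (6,2), (28,7)], [88]),
   ([(0,0), (11,2), (26,7)], [89]),
   ([(0,1), (7,3), (30,4), (25,5), (12,7)], [90, 91]),
   ([(0,0), (15,2), (11,6)], [90]),
   ([(0,0), (1,2), (17,6)], [91]),
   ([(0,1), (23,3), (0,4), (24,6), (8,7)], [92, 93]),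
   ([(0,0), (12,2), (13,5)], [92]),
   ([(0,0), (21,2), (28,5)], [93]),
   ([(0,1), (28,3), (24,5), (13,6), (3,7)], [94, 95]),
   ([(0,0), (27,2), (9,4)], [94]),
   ([(0,0), (28,2), (15,4)], [95]),
   ([(0,2), (24,3), (5,4), (8,5), (0,6)], [96, 97]),
   ([(0,0), (1,1), (12,7)], [96]),
   ([(0,0), (28,1), (7,7)], [97]),
   ([(0,2), (14,3), (2,4), (12,5), (25,7)], [98, 99]),
   ([(0,0), (24,1), (22,6)], [98]),
   ([(0,0), (11,1), (25,6)], [99]),
   ([(0,2), (21,3), (12,4), (26,6), (11,7)], [100, 101]),
   ([(0,0), (20,1), (9,5)], [100]),
   ([(0,0), (16,1), (0,5)], [101]),
   ([(0,2), (25,3), (11,5), (28,6), (2,7)], [102, 103]),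
   ([(0,0), (29,1), (20,4)], [102]),
   ([(0,0), (26,1), (14,4)], [103]),
   ([(0,0), (5,1), (19,2), (23,3)], [104]),
   ([(0,4), (22,5), (10,6), (11,7)], [104]),
   ([(0,0), (14,1), (0,2), (15,3)], [105]),
   ([(0,4), (20,5), (29,6), (16,7)], [105]),
   ([(0,0), (3,1), (13,2), (8,3)], [106]),
   ([(0,4), (1,5), (17,6), (12,7)], [106])]"

definition base318 :: "bb list" where
  "base318 = [([(0,0), (18,1), (16,2), (18,3), (2,4)], [0, 1]),
   ([(0,5), (0,6), (28,7)], [0]),
   ([(0,5), (29,6), (0,7)], [1]),
   ([(0,0), (2,1), (25,2), (11,3), (18,5)], [2, 3]),
   ([(0,4), (28,6), (9,7)], [2]),
   ([(0,4), (2,6), (5,7)], [3]),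
   ([(0,0), (13,1), (22,2), (28,3), (14,6)], [4, 5]),
   ([(0,4), (5,5), (14,7)], [4]),
   ([(0,4), (16,5), (17,7)], [5]),
   ([(0,0), (12,1), (5,2), (5,3), (19,7)], [6, 7]),
   ([(0,4), (12,5), (13,6)], [6]),
   ([(0,4), (29,5), (8,6)], [7]),
   ([(0,0), (25,1), (26,2), (17,4), (1,5)], [8, 9]),
   ([(0,3), (4,6), (17,7)], [8]),
   ([(0,3), (20,6), (3,7)], [9]),
   ([(0,0), (19,1), (30,2), (13,4), (4,6)], [10, 11]),
   ([(0,3), (25,5), (10,7)], [10]),
   ([(0,3), (4,5), (2,7)], [11]),
   ([(0,0), (17,1), (14,2), (30,4), (2,7)], [12, 13]),
   ([(0,3), (22,5), (19,6)], [12]),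
   ([(0,3), (21,5), (12,6)], [13]),
   ([(0,0), (15,1), (3,2), (25,5), (12,6)], [14, 15]),
   ([(0,3), (2,4), (22,7)], [14]),
   ([(0,3), (4,4), (0,7)], [15]),
   ([(0,0), (8,1), (20,2), (10,5), (29,7)], [16, 17]),
   ([(0,3), (21,4), (15,6)], [16]),
   ([(0,3), (0,4), (27,6)], [17]),
   ([(0,0), (22,1), (4,2), (8,6), (8,7)], [18, 19]),
   ([(0,3), (24,4), (30,5)], [18]),
   ([(0,3), (27,4), (5,5)], [19]),
   ([(0,0), (4,1), (30,3), (28,4), (27,5)], [20, 21]),
   ([(0,2), (14,6), (23,7)], [20]),
   ([(0,2), (1,6), (7,7)], [21]),
   ([(0,0), (7,1), (10,3), (19,4), (18,6)], [22, 23]),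
   ([(0,2), (17,5), (21,7)], [22]),
   ([(0,2), (3,5), (8,7)], [23]),
   ([(0,0), (23,1), (17,3), (0,4), (1,7)], [24, 25]),
   ([(0,2), (25,5), (24,6)], [24]),
   ([(0,2), (23,5), (29,6)], [25]),
   ([(0,0), (27,1), (29,3), (7,5), (0,6)], [26, 27]),
   ([(0,2), (1,4), (29,7)], [26]),
   ([(0,2), (26,4), (20,7)], [27]),
   ([(0,0), (9,1), (26,3), (14,5), (13,7)], [28, 29]),
   ([(0,2), (29,4), (30,6)], [28]),
   ([(0,2), (3,4), (22,6)], [29]),
   ([(0,0), (30,1), (9,3), (20,6), (18,7)], [30, 31]),
   ([(0,2), (27,4), (20,5)], [30]),
   ([(0,2), (19,4), (30,5)], [31]),
   ([(0,0), (21,1), (4,4), (11,5), (16,6)], [32, 33]),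
   ([(0,2), (3,3), (26,7)], [32]),
   ([(0,2), (23,3), (27,7)], [33]),
   ([(0,0), (0,1), (6,4), (29,5), (24,7)], [34, 35]),
   ([(0,2), (16,3), (6,6)], [34]),
   ([(0,2), (19,3), (10,6)], [35]),
   ([(0,0), (10,1), (5,4), (28,6), (5,7)], [36, 37]),
   ([(0,2), (22,3), (4,5)], [36]),
   ([(0,2), (9,3), (19,5)], [37]),
   ([(0,0), (6,1), (19,5), (9,6), (3,7)], [38, 39]),
   ([(0,2), (12,3), (9,4)], [38]),
   ([(0,2), (20,3), (6,4)], [39]),
   ([(0,0), (7,2), (12,3), (7,4), (4,5)], [40, 41]),
   ([(0,1), (19,6), (18,7)], [40]),
   ([(0,1), (22,6), (29,7)], [41]),
   ([(0,0), (23,2), (24,3), (27,4), (7,6)], [42, 43]),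
   ([(0,1), (30,5), (22,7)], [42]),
   ([(0,1), (12,5), (14,7)], [43]),
   ([(0,0), (9,2), (19,3), (24,4), (15,7)], [44, 45]),
   ([(0,1), (18,5), (30,6)], [44]),
   ([(0,1), (27,5), (9,6)], [45]),
   ([(0,0), (17,2), (14,3), (30,5), (6,6)], [46, 47]),
   ([(0,1), (7,4), (13,7)], [46]),
   ([(0,1), (2,4), (6,7)], [47]),
   ([(0,0), (24,2), (20,3), (20,5), (27,7)], [48, 49]),
   ([(0,1), (21,4), (27,6)], [48]),
   ([(0,1), (17,4), (2,6)], [49]),
   ([(0,0), (2,2), (1,3), (19,6), (30,7)], [50, 51]),
   ([(0,1), (5,4), (26,5)], [50]),
   ([(0,1), (3,4), (3,5)], [51]),
   ([(0,0), (8,2), (18,4), (6,5), (21,6)], [52, 53]),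
   ([(0,1), (16,3), (5,7)], [52]),
   ([(0,1), (27,3), (20,7)], [53]),
   ([(0,0), (18,2), (29,4), (23,5), (0,7)], [54, 55]),
   ([(0,1), (8,3), (8,6)], [54]),
   ([(0,1), (12,3), (25,6)], [55]),
   ([(0,0), (29,2), (21,4), (10,6), (14,7)], [56, 57]),
   ([(0,1), (19,3), (0,5)], [56]),
   ([(0,1), (30,3), (1,5)], [57]),
   ([(0,0), (10,2), (26,5), (29,6), (20,7)], [58, 59]),
   ([(0,1), (29,3), (18,4)], [58]),
   ([(0,1), (4,3), (20,4)], [59]),
   ([(0,0), (0,3), (11,4), (24,5), (26,6)], [60, 61]),
   ([(0,1), (3,2), (2,7)], [60]),
   ([(0,1), (0,2), (1,7)], [61]),
   ([(0,0), (22,3), (16,4), (2,5), (23,7)], [62, 63]),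
   ([(0,1), (16,2), (6,6)], [62]),
   ([(0,1), (4,2), (12,6)], [63]),
   ([(0,0), (7,3), (8,4), (13,6), (6,7)], [64, 65]),
   ([(0,1), (25,2), (4,5)], [64]),
   ([(0,1), (30,2), (8,5)], [65]),
   ([(0,0), (25,3), (8,5), (3,6), (22,7)], [66, 67]),
   ([(0,1), (20,2), (27,4)], [66]),
   ([(0,1), (21,2), (29,4)], [67]),
   ([(0,1), (15,2), (22,3), (9,4), (17,5)], [68, 69]),
   ([(0,0), (23,6), (9,7)], [68]),
   ([(0,0), (15,6), (11,7)], [69]),
   ([(0,1), (8,2), (21,3), (28,4), (15,6)], [70, 71]),
   ([(0,0), (17,5), (10,7)], [70]),
   ([(0,0), (5,5), (17,7)], [71]),
   ([(0,1), (26,2), (6,3), (16,4), (0,7)], [72, 73]),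
   ([(0,0), (16,5), (27,6)], [72]),
   ([(0,0), (22,5), (5,6)], [73]),
   ([(0,1), (5,2), (13,3), (19,5), (23,6)], [74, 75]),
   ([(0,0), (26,4), (21,7)], [74]),
   ([(0,0), (25,4), (4,7)], [75]),
   ([(0,1), (22,2), (20,3), (9,5), (15,7)], [76, 77]),
   ([(0,0), (12,4), (2,6)], [76]),
   ([(0,0), (23,4), (30,6)], [77]),
   ([(0,1), (27,2), (14,3), (7,6), (27,7)], [78, 79]),
   ([(0,0), (1,4), (15,5)], [78]),
   ([(0,0), (10,4), (12,5)], [79]),
   ([(0,1), (2,2), (1,4), (28,5), (5,6)], [80, 81]),
   ([(0,0), (4,3), (16,7)], [80]),
   ([(0,0), (6,3), (25,7)], [81]),
   ([(0,1), (7,2), (4,4), (22,5), (25,7)], [82, 83]),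
   ([(0,0), (3,3), (1,6)], [82]),
   ([(0,0), (27,3), (24,6)], [83]),
   ([(0,1), (18,2), (11,4), (20,6), (30,7)], [84, 85]),
   ([(0,0), (13,3), (21,5)], [84]),
   ([(0,0), (2,3), (3,5)], [85]),
   ([(0,1), (6,2), (6,5), (0,6), (23,7)], [86, 87]),
   ([(0,0), (21,3), (3,4)], [86]),
   ([(0,0), (16,3), (22,4)], [87]),
   ([(0,1), (11,3), (10,4), (14,5), (10,6)], [88, 89]),
   ([(0,0), (6,2), (28,7)], [88]),
   ([(0,0), (11,2), (26,7)], [89]),
   ([(0,1), (7,3), (30,4), (25,5), (12,7)], [90, 91]),
   ([(0,0), (15,2), (11,6)], [90]),
   ([(0,0), (1,2), (17,6)], [91]),
   ([(0,1), (23,3), (0,4), (24,6), (8,7)], [92, 93]),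
   ([(0,0), (12,2), (13,5)], [92]),
   ([(0,0), (21,2), (28,5)], [93]),
   ([(0,1), (28,3), (24,5), (13,6), (3,7)], [94, 95]),
   ([(0,0), (27,2), (9,4)], [94]),
   ([(0,0), (28,2), (15,4)], [95]),
   ([(0,2), (24,3), (5,4), (8,5), (0,6)], [96, 97]),
   ([(0,0), (1,1), (12,7)], [96]),
   ([(0,0), (28,1), (7,7)], [97]),
   ([(0,2), (14,3), (2,4), (12,5), (25,7)], [98, 99]),
   ([(0,0), (24,1), (22,6)], [98]),
   ([(0,0), (11,1), (25,6)], [99]),
   ([(0,2), (21,3), (12,4), (26,6), (11,7)], [100, 101]),
   ([(0,0), (20,1), (9,5)], [100]),
   ([(0,0), (16,1), (0,5)], [101]),
   ([(0,2), (25,3), (11,5), (28,6), (2,7)], [102, 103]),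
   ([(0,0), (29,1), (20,4)], [102]),
   ([(0,0), (26,1), (14,4)], [103]),
   ([(0,0), (5,1), (19,2), (23,3)], [104]),
   ([(0,4), (22,5), (10,6), (11,7)], [104]),
   ([(0,0), (14,1), (0,2), (15,3)], [105]),
   ([(0,4), (20,5), (29,6), (16,7)], [105]),
   ([(0,0), (3,1), (13,2), (8,3)], []),
   ([(0,4), (1,5), (17,6), (12,7)], [])]"

lemma good321: "goodbase 107 base321"
  by code_simp

lemma good318: "goodbase 106 base318"
  by code_simp

theorem lemma2p7:
  shows "has_4GDD_of_type (replicate_mset 8 93 + {#318#})
       \<and> has_4GDD_of_type (replicate_mset 8 93 + {#321#})"
proof
  show "has_4GDD_of_type (replicate_mset 8 93 + {#318#})"
    using main_gdd[OF good318] by simp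
  show "has_4GDD_of_type (replicate_mset 8 93 + {#321#})"
    using main_gdd[OF good321] by simp
qed

end
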